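(* In the upper half-space model $\mathbb{H}^3=\{x_3>0\}$ with metric $\frac{1}{x_3^2}(dx_1^2+dx_2^2+dx_3^2)$, let $\gamma:[0,\infty)\to\mathbb{H}^3$, $\gamma(s)=(\gamma_1(s),0,\gamma_2(s))$, be a regular curve parametrized by hyperbolic arc length with $\gamma_1>0$, $\gamma_2>0$, and set $w_{-1}=\gamma_1/\gamma_2$ and $x_g(\gamma([0,s]))=\frac{1}{s}\int_0^s w_{-1}(t)\,dt$. Suppose there are $C>0$ and $s_0>0$ such that $x_g(\gamma([0,s]))\le C\,s$ for all $s\ge s_0$. Then the end of revolution $f(\theta,s)=R_\theta\gamma(s)$ is parabolic.
   Context: $R_\theta$ is the rotation of angle $\theta$ about the $x_3$-axis, $(x_1,x_2,x_3)\mapsto(x_1\cos\theta-x_2\sin\theta,x_1\sin\theta+x_2\cos\theta,x_3)$, which is an isometry of $\mathbb{H}^3$. The end carries the induced metric. An end is parabolic if every bounded harmonic function on it is determined by its boundary values. *)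

theory Defs
  imports "HOL-Analysis.Analysis"
begin

type_synonym R3 = "real \<times> real \<times> real"

definition x3 :: "R3 \<Rightarrow> real" where "x3 q = snd (snd q)"

definition hyp_inner :: "R3 \<Rightarrow> R3 \<Rightarrow> R3 \<Rightarrow> real" where
  "hyp_inner q v w = inner v w / (x3 q)^2"

definition rot :: "real \<Rightarrow> R3 \<Rightarrow> R3" where
  "rot \<theta> q = (case q of (a, b, c) \<Rightarrow>
      (a * cos \<theta> - b * sin \<theta>, a * sin \<theta> + b * cos \<theta>, c))"

definition pd1 :: "(real \<times> real \<Rightarrow> 'a::real_normed_vector) \<Rightarrow> real \<times> real \<Rightarrow> 'a" where
  "pd1 F p = vector_derivative (\<lambda>t. F (t, snd p)) (at (fst p))"
definition pd2 :: "(real \<times> real \<Rightarrow> 'a::real_normed_vector) \<Rightarrow> real \<times> real \<Rightarrow> 'a" where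
  "pd2 F p = vector_derivative (\<lambda>t. F (fst p, t)) (at (snd p))"

definition has_cont_partials :: "(real \<times> real) set \<Rightarrow> (real \<times> real \<Rightarrow> real) \<Rightarrow> bool" where
  "has_cont_partials U F \<longleftrightarrow> continuous_on U F \<and>
     (\<forall>p\<in>U. (\<lambda>t. F (t, snd p)) differentiable (at (fst p)) \<and>
             (\<lambda>t. F (fst p, t)) differentiable (at (snd p))) \<and>
     continuous_on U (pd1 F) \<and> continuous_on U (pd2 F)"

definition C2_on :: "(real \<times> real) set \<Rightarrow> (real \<times> real \<Rightarrow> real) \<Rightarrow> bool" where
  "C2_on U u \<longleftrightarrow> has_cont_partials U u \<and> has_cont_partials U (pd1 u) \<and> has_cont_partials U (pd2 u)"

definition g11 :: "(real \<times> real \<Rightarrow> R3) \<Rightarrow> real \<times> real \<Rightarrow> real" where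
  "g11 f p = hyp_inner (f p) (pd1 f p) (pd1 f p)"
definition g12 :: "(real \<times> real \<Rightarrow> R3) \<Rightarrow> real \<times> real \<Rightarrow> real" where
  "g12 f p = hyp_inner (f p) (pd1 f p) (pd2 f p)"
definition g22 :: "(real \<times> real \<Rightarrow> R3) \<Rightarrow> real \<times> real \<Rightarrow> real" where
  "g22 f p = hyp_inner (f p) (pd2 f p) (pd2 f p)"
definition gdet :: "(real \<times> real \<Rightarrow> R3) \<Rightarrow> real \<times> real \<Rightarrow> real" where
  "gdet f p = g11 f p * g22 f p - (g12 f p)^2"

text \<open>Laplace-Beltrami operator of the induced metric in coordinates:
  Delta u = (1/sqrt det g) sum_i d_i (sqrt det g * g^{ij} d_j u).\<close>
definition flux1 :: "(real \<times> real \<Rightarrow> R3) \<Rightarrow> (real \<times> real \<Rightarrow> real) \<Rightarrow> real \<times> real \<Rightarrow> real" where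
  "flux1 f u p = sqrt (gdet f p) *
     ((g22 f p / gdet f p) * pd1 u p + (- g12 f p / gdet f p) * pd2 u p)"
definition flux2 :: "(real \<times> real \<Rightarrow> R3) \<Rightarrow> (real \<times> real \<Rightarrow> real) \<Rightarrow> real \<times> real \<Rightarrow> real" where
  "flux2 f u p = sqrt (gdet f p) *
     ((- g12 f p / gdet f p) * pd1 u p + (g11 f p / gdet f p) * pd2 u p)"
definition laplace_beltrami :: "(real \<times> real \<Rightarrow> R3) \<Rightarrow> (real \<times> real \<Rightarrow> real) \<Rightarrow> real \<times> real \<Rightarrow> real" where
  "laplace_beltrami f u p = (pd1 (flux1 f u) p + pd2 (flux2 f u) p) / sqrt (gdet f p)"

definition harmonic_on :: "(real \<times> real \<Rightarrow> R3) \<Rightarrow> (real \<times> real) set \<Rightarrow> (real \<times> real \<Rightarrow> real) \<Rightarrow> bool" where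
  "harmonic_on f U u \<longleftrightarrow> C2_on U u \<and> (\<forall>p\<in>U. laplace_beltrami f u p = 0)"

text \<open>The end parametrised by f(theta, s), s >= 0, theta mod 2 pi; functions on it are
  2pi-periodic functions of (theta, s) with s >= 0. Its boundary is s = 0.
  Parabolic: every bounded harmonic function is determined by its boundary values.\<close>
definition end_function :: "(real \<times> real \<Rightarrow> real) \<Rightarrow> bool" where
  "end_function u \<longleftrightarrow> (\<forall>\<theta> s. u (\<theta> + 2 * pi, s) = u (\<theta>, s))"

definition bounded_harmonic_on_end :: "(real \<times> real \<Rightarrow> R3) \<Rightarrow> (real \<times> real \<Rightarrow> real) \<Rightarrow> bool" where
  "bounded_harmonic_on_end f u \<longleftrightarrow> end_function u \<and>
     continuous_on {p. snd p \<ge> 0} u \<and>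
     harmonic_on f {p. snd p > 0} u \<and>
     (\<exists>B. \<forall>p. snd p \<ge> 0 \<longrightarrow> \<bar>u p\<bar> \<le> B)"

definition parabolic_end :: "(real \<times> real \<Rightarrow> R3) \<Rightarrow> bool" where
  "parabolic_end f \<longleftrightarrow>
     (\<forall>u v. bounded_harmonic_on_end f u \<and> bounded_harmonic_on_end f v \<and>
            (\<forall>\<theta>. u (\<theta>, 0) = v (\<theta>, 0)) \<longrightarrow> (\<forall>p. snd p \<ge> 0 \<longrightarrow> u p = v p))"

definition smooth_at_all :: "real set \<Rightarrow> (real \<Rightarrow> real) \<Rightarrow> bool" where
  "smooth_at_all S g \<longleftrightarrow> (\<forall>n. \<forall>x\<in>S. ((deriv ^^ n) g) differentiable (at x))"

end

theory Submission
  imports Defs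
begin


lemma swap_cont:
  assumes "continuous_on {p::real\<times>real. snd p > 0} h"
  shows "continuous_on ({0<..} \<times> {0..2*pi}) (\<lambda>p. h (snd p, fst p))"
  by (rule continuous_on_compose2[OF assms]) (auto intro!: continuous_intros)
lemma swap_cont0:
  assumes "continuous_on {p::real\<times>real. snd p \<ge> 0} h"
  shows "continuous_on ({0..} \<times> {0..2*pi}) (\<lambda>p. h (snd p, fst p))"
  by (rule continuous_on_compose2[OF assms]) (auto intro!: continuous_intros)

lemma slice_cont:
  assumes "continuous_on {p::real\<times>real. snd p > 0} (h::real\<times>real\<Rightarrow>real)" "s > 0"
  shows "continuous_on {0..2*pi} (\<lambda>t. h (t, s))"
  by (rule continuous_on_compose2[OF assms(1)]) (use assms(2) in \<open>auto intro!: continuous_intros\<close>)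

lemma slice_int:
  assumes "continuous_on {p::real\<times>real. snd p > 0} (h::real\<times>real\<Rightarrow>real)" "s > 0"
  shows "(\<lambda>t. h (t, s)) integrable_on {0..2*pi}"
  by (rule integrable_continuous_interval, rule slice_cont[OF assms])

lemma leib:
  assumes der: "\<And>x t. x > 0 \<Longrightarrow> ((\<lambda>x. f x t) has_real_derivative fx (t, x)) (at x)"
    and cf: "\<And>x. x > 0 \<Longrightarrow> (f x) integrable_on {0..2*pi}"
    and cont: "continuous_on {p::real\<times>real. snd p > 0} fx"
    and x0: "x0 > 0"
  shows "((\<lambda>x. integral {0..2*pi} (f x)) has_real_derivative integral {0..2*pi} (\<lambda>t. fx (t, x0))) (at x0)"
proof -
  have "((\<lambda>x. integral (cbox 0 (2*pi)) (f x)) has_field_derivative integral (cbox 0 (2*pi)) (\<lambda>t. fx (t, x0))) (at x0 within {0<..})"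
  proof (rule leibniz_rule_field_derivative[where fx="\<lambda>x t. fx (t, x)"])
    show "\<And>x t. x \<in> {0<..} \<Longrightarrow> t \<in> cbox 0 (2 * pi) \<Longrightarrow> ((\<lambda>x. f x t) has_field_derivative fx (t, x)) (at x within {0<..})"
      by (rule has_field_derivative_at_within, rule der) simp
    show "\<And>x. x \<in> {0<..} \<Longrightarrow> f x integrable_on cbox 0 (2 * pi)" unfolding box_real by (rule cf) simp
    show "continuous_on ({0<..} \<times> cbox 0 (2 * pi)) (\<lambda>(x, t). fx (t, x))"
    proof -
      have e: "(\<lambda>(x, t). fx (t, x)) = (\<lambda>p. fx (snd p, fst p))" by (rule ext) (simp add: case_prod_beta)
      show ?thesis unfolding e box_real by (rule swap_cont[OF cont])
    qed
  qed (use x0 in \<open>auto simp: convex_real_interval\<close>)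
  moreover have "at x0 within {0<..} = at x0" by (rule at_within_open) (use x0 in auto)
  ultimately show ?thesis unfolding box_real by metis
qed


lemma periodic_nat:
  fixes h :: "real \<Rightarrow> real"
  assumes per: "\<And>x. h (x + 2*pi) = h x"
  shows "h (x + real n * (2*pi)) = h x"
proof (induction n)
  case 0 then show ?case by simp
next
  case (Suc n)
  have "h (x + real (Suc n) * (2*pi)) = h ((x + real n * (2*pi)) + 2*pi)" by (simp add: algebra_simps)
  also have "\<dots> = h (x + real n * (2*pi))" by (rule per)
  finally show ?case using Suc by simp
qed

lemma periodic_int:
  fixes h :: "real \<Rightarrow> real"
  assumes per: "\<And>x. h (x + 2*pi) = h x"
  shows "h (x + real_of_int k * (2*pi)) = h x"
proof (cases "k \<ge> 0")
  case True
  obtain n where "k = int n" using True by (intro that[of "nat k"]) simp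
  then show ?thesis using periodic_nat[where h=h, OF per, of x n] by simp
next
  case False
  obtain n where k: "k = - int n" using False by (intro that[of "nat (-k)"]) simp
  have "h ((x + real_of_int k * (2*pi)) + real n * (2*pi)) = h (x + real_of_int k * (2*pi))"
    by (rule periodic_nat[where h=h, OF per])
  then show ?thesis using k by simp
qed

lemma periodic_zero:
  fixes h :: "real \<Rightarrow> real"
  assumes per: "\<And>x. h (x + 2*pi) = h x"
    and z: "\<And>x. x \<in> {0..2*pi} \<Longrightarrow> h x = 0"
  shows "h x = 0"
proof -
  define k where "k = \<lfloor>x / (2*pi)\<rfloor>"
  define y where "y = x - real_of_int k * (2*pi)"
  have "real_of_int k \<le> x / (2*pi)" "x / (2*pi) < real_of_int k + 1"
    using floor_correct[of "x/(2*pi)"] unfolding k_def by auto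
  then have "real_of_int k * (2*pi) \<le> x" "x < (real_of_int k + 1) * (2*pi)"
    using pi_gt_zero by (simp_all add: field_simps)
  then have "y \<in> {0..2*pi}" unfolding y_def by (auto simp: algebra_simps)
  have "h x = h (y + real_of_int k * (2*pi))" unfolding y_def by simp
  also have "\<dots> = h y" by (rule periodic_int[where h=h, OF per])
  also have "\<dots> = 0" using z \<open>y \<in> _\<close> by blast
  finally show ?thesis .
qed


lemma cont_from_deriv:
  assumes "\<And>x. x \<in> S \<Longrightarrow> (f has_real_derivative f' x) (at x)"
  shows "continuous_on S f"
  by (rule continuous_at_imp_continuous_on) (meson assms DERIV_isCont)

lemma main_energy:
  fixes d ds dss dt dtt :: "real\<times>real \<Rightarrow> real" and w w' :: "real \<Rightarrow> real" and B C s0 :: real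
  assumes wpos: "\<And>s. s \<ge> 0 \<Longrightarrow> w s > 0"
    and wcont: "continuous_on {0..} w"
    and wder: "\<And>s. s > 0 \<Longrightarrow> (w has_real_derivative w' s) (at s)"
    and C: "C > 0" and s0: "s0 > 0"
    and growth: "\<And>s. s \<ge> s0 \<Longrightarrow> integral {0..s} w \<le> C * s^2"
    and per: "\<And>\<theta> s. d (\<theta> + 2*pi, s) = d (\<theta>, s)"
    and dcont: "continuous_on {p. snd p \<ge> 0} d"
    and bnd: "\<And>p. snd p \<ge> 0 \<Longrightarrow> \<bar>d p\<bar> \<le> B"
    and bdry: "\<And>\<theta>. d (\<theta>, 0) = 0"
    and dsder: "\<And>\<theta> s. s > 0 \<Longrightarrow> ((\<lambda>t. d (\<theta>, t)) has_real_derivative ds (\<theta>, s)) (at s)"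
    and dssder: "\<And>\<theta> s. s > 0 \<Longrightarrow> ((\<lambda>t. ds (\<theta>, t)) has_real_derivative dss (\<theta>, s)) (at s)"
    and dtder: "\<And>\<theta> s. s > 0 \<Longrightarrow> ((\<lambda>t. d (t, s)) has_real_derivative dt (\<theta>, s)) (at \<theta>)"
    and dttder: "\<And>\<theta> s. s > 0 \<Longrightarrow> ((\<lambda>t. dt (t, s)) has_real_derivative dtt (\<theta>, s)) (at \<theta>)"
    and cds: "continuous_on {p. snd p > 0} ds"
    and cdss: "continuous_on {p. snd p > 0} dss"
    and cdt: "continuous_on {p. snd p > 0} dt"
    and cdtt: "continuous_on {p. snd p > 0} dtt"
    and pde: "\<And>\<theta> s. s > 0 \<Longrightarrow> dtt (\<theta>, s) / w s + w' s * ds (\<theta>, s) + w s * dss (\<theta>, s) = 0"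
    and p: "snd p \<ge> 0"
  shows "d p = 0"
proof -
  have cd: "continuous_on {p. snd p > 0} d"
    by (rule continuous_on_subset[OF dcont]) auto
  define F where "F s = integral {0..2*pi} (\<lambda>\<theta>. (d (\<theta>, s))^2)" for s
  define P where "P s = integral {0..2*pi} (\<lambda>\<theta>. 2 * d (\<theta>, s) * ds (\<theta>, s))" for s
  define P1 where "P1 s = integral {0..2*pi} (\<lambda>\<theta>. 2 * ((ds (\<theta>, s))^2 + d (\<theta>, s) * dss (\<theta>, s)))" for s
  define G where "G s = w s * P s" for s
  have cd2: "continuous_on {p. snd p > 0} (\<lambda>p. (d p)^2)" by (intro continuous_intros cd)
  have cP: "continuous_on {p. snd p > 0} (\<lambda>p. 2 * d p * ds p)" by (intro continuous_intros cd cds)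
  have cP1: "continuous_on {p. snd p > 0} (\<lambda>p. 2 * ((ds p)^2 + d p * dss p))" by (intro continuous_intros cd cds cdss)
  have Fder: "(F has_real_derivative P s) (at s)" if s: "s > 0" for s
    unfolding F_def P_def
  proof (rule leib[where fx="\<lambda>p. 2 * d p * ds p"])
    fix x t :: real assume x: "x > 0"
    have "((\<lambda>x. d (t, x) * d (t, x)) has_real_derivative ds (t, x) * d (t, x) + ds (t, x) * d (t, x)) (at x)"
      by (rule DERIV_mult[OF dsder[OF x] dsder[OF x]])
    then show "((\<lambda>x. (d (t, x))^2) has_real_derivative 2 * d (t, x) * ds (t, x)) (at x)"
      by (simp add: power2_eq_square algebra_simps)
  next
    fix x :: real assume "x > 0"
    then show "(\<lambda>\<theta>. (d (\<theta>, x))^2) integrable_on {0..2*pi}" by (rule slice_int[OF cd2])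
  qed (use cP s in auto)
  have Pder: "(P has_real_derivative P1 s) (at s)" if s: "s > 0" for s
    unfolding P1_def P_def
  proof (rule leib[where fx="\<lambda>p. 2 * ((ds p)^2 + d p * dss p)"])
    fix x t :: real assume x: "x > 0"
    have "((\<lambda>x. d (t, x) * ds (t, x)) has_real_derivative ds (t, x) * ds (t, x) + dss (t, x) * d (t, x)) (at x)"
      by (rule DERIV_mult[OF dsder[OF x] dssder[OF x]])
    from DERIV_cmult[OF this, of 2]
    show "((\<lambda>x. 2 * d (t, x) * ds (t, x)) has_real_derivative 2 * ((ds (t, x))^2 + d (t, x) * dss (t, x))) (at x)"
      by (simp add: power2_eq_square algebra_simps)
  next
    fix x :: real assume "x > 0"
    then show "(\<lambda>\<theta>. 2 * d (\<theta>, x) * ds (\<theta>, x)) integrable_on {0..2*pi}" by (rule slice_int[OF cP])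
  qed (use cP1 s in auto)
  have ibp: "integral {0..2*pi} (\<lambda>\<theta>. d (\<theta>, s) * dtt (\<theta>, s)) \<le> 0" if s: "s > 0" for s
  proof -
    have sh: "((\<lambda>t. d (t + 2*pi, s)) has_real_derivative dt (0, s)) (at 0)"
      using dtder[OF s, of 0] by (simp add: per)
    have "((\<lambda>t. d (t, s)) has_real_derivative dt (0, s)) (at (0 + 2*pi))"
      using DERIV_shift[of "\<lambda>t. d (t, s)" "dt (0, s)" 0 "2*pi"] sh by simp
    then have "((\<lambda>t. d (t, s)) has_real_derivative dt (0, s)) (at (2*pi))" by simp
    from DERIV_unique[OF dtder[OF s, of "2*pi"] this] have dtper: "dt (2*pi, s) = dt (0, s)" .
    have dper: "d (2*pi, s) = d (0, s)" using per[of 0 s] by simp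
    have ftc: "((\<lambda>\<theta>. dt (\<theta>, s) * dt (\<theta>, s) + d (\<theta>, s) * dtt (\<theta>, s)) has_integral
        (d (2*pi, s) * dt (2*pi, s) - d (0, s) * dt (0, s))) {0..2*pi}"
    proof (rule fundamental_theorem_of_calculus)
      show "0 \<le> 2*pi" by simp
    next
      fix x assume "x \<in> {0..2*pi}"
      have "((\<lambda>\<theta>. d (\<theta>, s) * dt (\<theta>, s)) has_real_derivative dt (x, s) * dt (x, s) + dtt (x, s) * d (x, s)) (at x)"
        by (rule DERIV_mult[OF dtder[OF s] dttder[OF s]])
      then have "((\<lambda>\<theta>. d (\<theta>, s) * dt (\<theta>, s)) has_real_derivative dt (x, s) * dt (x, s) + d (x, s) * dtt (x, s)) (at x)"
        by (simp add: mult.commute)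
      from has_field_derivative_at_within[OF this, of "{0..2*pi}"]
      show "((\<lambda>\<theta>. d (\<theta>, s) * dt (\<theta>, s)) has_vector_derivative dt (x, s) * dt (x, s) + d (x, s) * dtt (x, s)) (at x within {0..2*pi})"
        unfolding has_real_derivative_iff_has_vector_derivative .
    qed
    have c1: "continuous_on {p. snd p > 0} (\<lambda>p. dt p * dt p)" by (intro continuous_intros cdt)
    have c2: "continuous_on {p. snd p > 0} (\<lambda>p. d p * dtt p)" by (intro continuous_intros cd cdtt)
    have i1: "(\<lambda>\<theta>. dt (\<theta>, s) * dt (\<theta>, s)) integrable_on {0..2*pi}" using slice_int[OF c1 s] by simp
    have i2: "(\<lambda>\<theta>. d (\<theta>, s) * dtt (\<theta>, s)) integrable_on {0..2*pi}" using slice_int[OF c2 s] by simp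
    have "integral {0..2*pi} (\<lambda>\<theta>. dt (\<theta>, s) * dt (\<theta>, s) + d (\<theta>, s) * dtt (\<theta>, s)) = 0"
      using integral_unique[OF ftc] dtper dper by simp
    then have sum0: "integral {0..2*pi} (\<lambda>\<theta>. dt (\<theta>, s) * dt (\<theta>, s)) + integral {0..2*pi} (\<lambda>\<theta>. d (\<theta>, s) * dtt (\<theta>, s)) = 0"
      using Henstock_Kurzweil_Integration.integral_add[OF i1 i2] by simp
    have "integral {0..2*pi} (\<lambda>\<theta>. dt (\<theta>, s) * dt (\<theta>, s)) \<ge> 0"
      by (rule Henstock_Kurzweil_Integration.integral_nonneg[OF i1]) simp
    then show ?thesis using sum0 by linarith
  qed
  have Gder: "(G has_real_derivative (w' s * P s + w s * P1 s)) (at s)" if s: "s > 0" for s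
    unfolding G_def using DERIV_mult[OF wder[OF s] Pder[OF s]] by (simp add: algebra_simps)
  have Gnn: "w' s * P s + w s * P1 s \<ge> 0" if s: "s > 0" for s
  proof -
    have ws: "w s > 0" using wpos s by simp
    have hP: "((\<lambda>\<theta>. 2 * d (\<theta>, s) * ds (\<theta>, s)) has_integral P s) {0..2*pi}"
      unfolding P_def by (rule integrable_integral, rule slice_int[OF cP s])
    have hP1: "((\<lambda>\<theta>. 2 * ((ds (\<theta>, s))^2 + d (\<theta>, s) * dss (\<theta>, s))) has_integral P1 s) {0..2*pi}"
      unfolding P1_def by (rule integrable_integral, rule slice_int[OF cP1 s])
    have c3: "continuous_on {p. snd p > 0} (\<lambda>p. (ds p)^2)" by (intro continuous_intros cds)
    have c2: "continuous_on {p. snd p > 0} (\<lambda>p. d p * dtt p)" by (intro continuous_intros cd cdtt)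
    have h3: "((\<lambda>\<theta>. (ds (\<theta>, s))^2) has_integral integral {0..2*pi} (\<lambda>\<theta>. (ds (\<theta>, s))^2)) {0..2*pi}"
      by (rule integrable_integral, rule slice_int[OF c3 s])
    have h2: "((\<lambda>\<theta>. d (\<theta>, s) * dtt (\<theta>, s)) has_integral integral {0..2*pi} (\<lambda>\<theta>. d (\<theta>, s) * dtt (\<theta>, s))) {0..2*pi}"
      by (rule integrable_integral, rule slice_int[OF c2 s])
    have H1: "((\<lambda>\<theta>. w' s * (2 * d (\<theta>, s) * ds (\<theta>, s)) + w s * (2 * ((ds (\<theta>, s))^2 + d (\<theta>, s) * dss (\<theta>, s))))
        has_integral (w' s * P s + w s * P1 s)) {0..2*pi}"
      by (rule has_integral_add[OF has_integral_mult_right[OF hP] has_integral_mult_right[OF hP1]])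
    have H2: "((\<lambda>\<theta>. (2 * w s) * (ds (\<theta>, s))^2 + (-2 / w s) * (d (\<theta>, s) * dtt (\<theta>, s)))
        has_integral ((2 * w s) * integral {0..2*pi} (\<lambda>\<theta>. (ds (\<theta>, s))^2) + (-2 / w s) * integral {0..2*pi} (\<lambda>\<theta>. d (\<theta>, s) * dtt (\<theta>, s)))) {0..2*pi}"
      by (rule has_integral_add[OF has_integral_mult_right[OF h3] has_integral_mult_right[OF h2]])
    have eq: "(\<lambda>\<theta>. w' s * (2 * d (\<theta>, s) * ds (\<theta>, s)) + w s * (2 * ((ds (\<theta>, s))^2 + d (\<theta>, s) * dss (\<theta>, s))))
        = (\<lambda>\<theta>. (2 * w s) * (ds (\<theta>, s))^2 + (-2 / w s) * (d (\<theta>, s) * dtt (\<theta>, s)))"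
    proof (rule ext)
      fix \<theta>
      have e: "w s * dss (\<theta>, s) = - (dtt (\<theta>, s) / w s) - w' s * ds (\<theta>, s)" using pde[OF s, of \<theta>] by linarith
      have "w' s * (2 * d (\<theta>, s) * ds (\<theta>, s)) + w s * (2 * ((ds (\<theta>, s))^2 + d (\<theta>, s) * dss (\<theta>, s)))
          = 2 * w' s * d (\<theta>, s) * ds (\<theta>, s) + 2 * w s * (ds (\<theta>, s))^2 + 2 * d (\<theta>, s) * (w s * dss (\<theta>, s))"
        by (simp add: algebra_simps)
      also have "\<dots> = 2 * w' s * d (\<theta>, s) * ds (\<theta>, s) + 2 * w s * (ds (\<theta>, s))^2 + 2 * d (\<theta>, s) * (- (dtt (\<theta>, s) / w s) - w' s * ds (\<theta>, s))"
        by (simp only: e)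
      also have "\<dots> = (2 * w s) * (ds (\<theta>, s))^2 + (-2 / w s) * (d (\<theta>, s) * dtt (\<theta>, s))"
        by (simp add: algebra_simps)
      finally show "w' s * (2 * d (\<theta>, s) * ds (\<theta>, s)) + w s * (2 * ((ds (\<theta>, s))^2 + d (\<theta>, s) * dss (\<theta>, s)))
          = (2 * w s) * (ds (\<theta>, s))^2 + (-2 / w s) * (d (\<theta>, s) * dtt (\<theta>, s))" .
    qed
    have val: "w' s * P s + w s * P1 s = (2 * w s) * integral {0..2*pi} (\<lambda>\<theta>. (ds (\<theta>, s))^2) + (-2 / w s) * integral {0..2*pi} (\<lambda>\<theta>. d (\<theta>, s) * dtt (\<theta>, s))"
      using has_integral_unique[OF H1[unfolded eq] H2] .
    have n1: "integral {0..2*pi} (\<lambda>\<theta>. (ds (\<theta>, s))^2) \<ge> 0"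
      by (rule Henstock_Kurzweil_Integration.integral_nonneg[OF slice_int[OF c3 s]]) simp
    have t1: "(2 * w s) * integral {0..2*pi} (\<lambda>\<theta>. (ds (\<theta>, s))^2) \<ge> 0"
      using n1 ws by simp
    have t2: "(-2 / w s) * integral {0..2*pi} (\<lambda>\<theta>. d (\<theta>, s) * dtt (\<theta>, s)) \<ge> 0"
      by (rule mult_nonpos_nonpos) (use ws ibp[OF s] in auto)
    show ?thesis using val t1 t2 by linarith
  qed
  have Gmono: "G a \<le> G b" if "0 < a" "a \<le> b" for a b
  proof (rule DERIV_nonneg_imp_increasing_open[OF \<open>a \<le> b\<close>])
    fix x assume "a < x" "x < b"
    then have "x > 0" using that by simp
    then show "\<exists>y. (G has_real_derivative y) (at x) \<and> 0 \<le> y" using Gder Gnn by blast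
  next
    show "continuous_on {a..b} G"
      by (rule cont_from_deriv[where f'="\<lambda>s. w' s * P s + w s * P1 s"]) (use Gder that in auto)
  qed
  have Fnn: "F s \<ge> 0" if "s > 0" for s
    unfolding F_def by (rule Henstock_Kurzweil_Integration.integral_nonneg) (auto intro: slice_int[OF cd2 that])
  have Fbnd: "F s \<le> 2 * pi * B^2" if s: "s > 0" for s
  proof -
    have "F s \<le> integral {0..2*pi} (\<lambda>\<theta>. B^2)"
      unfolding F_def
    proof (rule integral_le)
      show "(\<lambda>\<theta>. (d (\<theta>, s))^2) integrable_on {0..2*pi}" by (rule slice_int[OF cd2 s])
      show "(\<lambda>\<theta>. B^2) integrable_on {0..2*pi}" by (rule integrable_continuous_interval) (rule continuous_on_const)
      fix \<theta> assume "\<theta> \<in> {0..2*pi}"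
      have b: "\<bar>d (\<theta>, s)\<bar> \<le> B" using bnd[of "(\<theta>, s)"] s by simp
      have "\<bar>d (\<theta>, s)\<bar>^2 \<le> B^2" by (rule power_mono[OF b abs_ge_zero])
      then show "(d (\<theta>, s))^2 \<le> B^2" by simp
    qed
    also have "\<dots> = 2 * pi * B^2" by simp
    finally show ?thesis .
  qed
  have Gle: "G s \<le> 0" if s: "s > 0" for s
  proof (rule ccontr)
    assume nG: "\<not> G s \<le> 0"
    define c where "c = G s"
    have c: "c > 0" using nG c_def by simp
    define b0 where "b0 = max s s0"
    have b0: "b0 > 0" "b0 \<ge> s" "b0 \<ge> s0" using s s0 by (auto simp: b0_def)
    define W where "W x = integral {0..x} w" for x
    have Wder: "(W has_real_derivative w x) (at x)" if x: "x > 0" for x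
    proof -
      have "continuous_on {0..x+1} w" by (rule continuous_on_subset[OF wcont]) auto
      from integral_has_real_derivative[OF this, of x] x
      have "(W has_real_derivative w x) (at x within {0..x+1})" unfolding W_def[abs_def] by simp
      moreover have "at x within {0..x+1} = at x" by (rule at_within_interior) (use x in simp)
      ultimately show ?thesis by metis
    qed
    have Wnn: "W x \<ge> 0" if x: "x \<ge> 0" for x
      unfolding W_def
    proof (rule Henstock_Kurzweil_Integration.integral_nonneg)
      show "w integrable_on {0..x}" by (rule integrable_continuous_interval, rule continuous_on_subset[OF wcont]) auto
      show "\<And>t. t \<in> {0..x} \<Longrightarrow> 0 \<le> w t" using wpos by (auto intro: less_imp_le)
    qed
    have step: "F (2*b) \<ge> F b + c / (4*C)" if b: "b \<ge> b0" for b
    proof -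
      have bpos: "b > 0" using b b0 by simp
      define L where "L = 4*C*b"
      have L: "L > 0" unfolding L_def using C bpos by simp
      define H where "H = (\<lambda>x. F x - c * (2*x/L - W x / L^2))"
      have Hder: "(H has_real_derivative (P x - c * (2/L - w x / L^2))) (at x)" if x: "x > 0" for x
      proof -
        have d1: "((\<lambda>x. 2*x/L) has_real_derivative 2/L) (at x)"
          using DERIV_cdivide[OF DERIV_cmult[OF DERIV_ident, of 2], where c=L and x=x] by simp
        have d2: "((\<lambda>x. W x / L^2) has_real_derivative w x / L^2) (at x)"
          by (rule DERIV_cdivide[OF Wder[OF x]])
        show ?thesis unfolding H_def
          by (rule DERIV_diff[OF Fder[OF x] DERIV_cmult[OF DERIV_diff[OF d1 d2]]])
      qed
      have Hnn: "P x - c * (2/L - w x / L^2) \<ge> 0" if x: "x \<ge> b" for x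
      proof -
        have xp: "x > 0" using x bpos by simp
        have wx: "w x > 0" using wpos xp by simp
        have "G s \<le> G x" by (rule Gmono) (use s b b0 x in auto)
        then have "c \<le> w x * P x" unfolding c_def G_def .
        then have Px: "c / w x \<le> P x" using wx by (simp add: field_simps)
        have "1 / w x - (2/L - w x / L^2) = (L - w x)^2 / (w x * L^2)"
          using wx L by (simp add: field_simps power2_eq_square)
        also have "\<dots> \<ge> 0" using wx by simp
        finally have "2/L - w x / L^2 \<le> 1 / w x" by simp
        then have "c * (2/L - w x / L^2) \<le> c * (1 / w x)" by (rule mult_left_mono) (use c in simp)
        then show ?thesis using Px by simp
      qed
      have "H b \<le> H (2*b)"
      proof (rule DERIV_nonneg_imp_increasing_open[where f=H and a=b and b="2*b"])
        show "b \<le> 2*b" using bpos by simp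
        fix x assume "b < x" "x < 2*b"
        then show "\<exists>y. (H has_real_derivative y) (at x) \<and> 0 \<le> y"
          using Hder[of x] Hnn[of x] bpos by auto
      next
        show "continuous_on {b..2*b} H"
          by (rule cont_from_deriv[where f'="\<lambda>x. P x - c * (2/L - w x / L^2)"]) (use Hder bpos in auto)
      qed
      then have ineq: "F b - c * (2*b/L - W b / L^2) \<le> F (2*b) - c * (2*(2*b)/L - W (2*b) / L^2)"
        unfolding H_def by simp
      have q1: "2*b/L = 1/(2*C)" unfolding L_def using bpos C by (simp add: field_simps)
      have gW: "W (2*b) \<le> C * (2*b)^2" unfolding W_def by (rule growth) (use b b0 bpos in auto)
      have "W (2*b) / L^2 \<le> (C * (2*b)^2) / L^2" by (rule divide_right_mono[OF gW]) simp
      also have "(C * (2*b)^2) / L^2 = 1/(4*C)" unfolding L_def using bpos C by (simp add: field_simps power2_eq_square)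
      finally have q2: "W (2*b) / L^2 \<le> 1/(4*C)" .
      have q3: "W b / L^2 \<ge> 0" using Wnn[of b] bpos by simp
      have r2: "c * (W (2*b) / L^2) \<le> c * (1/(4*C))" by (rule mult_left_mono[OF q2]) (use c in simp)
      have r3: "c * (W b / L^2) \<ge> 0" by (rule mult_nonneg_nonneg) (use c q3 in auto)
      have r1: "c * (2*b/L) = 2 * (c / (4*C))" unfolding q1 using C by (simp add: field_simps)
      have expand: "c * (2*(2*b)/L - W (2*b) / L^2) - c * (2*b/L - W b / L^2)
          = c * (2*b/L) - c * (W (2*b) / L^2) + c * (W b / L^2)"
        by (simp add: algebra_simps)
      have r4: "c * (1/(4*C)) = c / (4*C)" by simp
      show ?thesis using ineq expand r1 r2 r3 r4 by linarith
    qed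
    have ind: "F (2^n * b0) \<ge> real n * (c / (4*C))" for n
    proof (induction n)
      case 0
      then show ?case using Fnn[OF b0(1)] by simp
    next
      case (Suc n)
      have "(1::real) \<le> 2^n" by simp
      then have "b0 \<le> 2^n * b0" using b0(1) by (simp add: mult_le_cancel_right1)
      from step[OF this] have "F (2 * (2^n * b0)) \<ge> F (2^n * b0) + c / (4*C)" .
      moreover have "real (Suc n) * (c / (4*C)) = real n * (c / (4*C)) + c / (4*C)" by (simp add: algebra_simps add_divide_distrib)
      moreover have "F ((2::real) ^ Suc n * b0) = F (2 * (2^n * b0))" by (simp add: mult.assoc)
      ultimately show ?case using Suc by linarith
    qed
    have cc: "c / (4*C) > 0" using c C by simp
    obtain n where n: "2 * pi * B^2 < real n * (c / (4*C))" using ex_less_of_nat_mult[OF cc] by blast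
    have "2^n * b0 > 0" using b0(1) by simp
    from Fbnd[OF this] ind[of n] n show False by linarith
  qed
  have Pnp: "P s \<le> 0" if s: "s > 0" for s
  proof (rule ccontr)
    assume "\<not> P s \<le> 0"
    then have "G s > 0" unfolding G_def using wpos[of s] s by simp
    then show False using Gle[OF s] by simp
  qed
  have Fmono: "F b \<le> F a" if "0 < a" "a \<le> b" for a b
  proof -
    have "(- F) a \<le> (- F) b"
    proof (rule DERIV_nonneg_imp_increasing_open[OF \<open>a \<le> b\<close>])
      fix x assume "a < x" "x < b"
      then show "\<exists>y. ((- F) has_real_derivative y) (at x) \<and> 0 \<le> y"
        using DERIV_minus[OF Fder, of x] Pnp[of x] that by (auto simp: fun_Compl_def)
    next
      show "continuous_on {a..b} (- F)"
        by (rule cont_from_deriv[where f'="\<lambda>s. - P s"]) (use Fder that in \<open>auto intro!: DERIV_minus simp: fun_Compl_def\<close>)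
    qed
    then show ?thesis by simp
  qed
  have Fcont: "continuous_on {0..} F"
  proof -
    have c0: "continuous_on {p. snd p \<ge> 0} (\<lambda>p. (d p)^2)" by (intro continuous_intros dcont)
    have e: "(\<lambda>(x, t). (d (t, x))^2) = (\<lambda>p. (d (snd p, fst p))^2)" by (rule ext) (simp add: case_prod_beta)
    have "continuous_on {0..} (\<lambda>x. integral (cbox 0 (2*pi)) (\<lambda>\<theta>. (d (\<theta>, x))^2))"
      by (rule integral_continuous_on_param) (unfold e box_real, rule swap_cont0[OF c0])
    then show ?thesis unfolding F_def box_real .
  qed
  have F0: "F 0 = 0" unfolding F_def by (simp add: bdry)
  have Fz: "F s = 0" if s: "s > 0" for s
  proof (rule ccontr)
    assume "F s \<noteq> 0"
    then have Fs: "F s > 0" using Fnn[OF s] by simp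
    have "\<forall>x\<in>{0..}. \<forall>e>0. \<exists>\<delta>>0. \<forall>x'\<in>{0..}. dist x' x < \<delta> \<longrightarrow> dist (F x') (F x) < e"
      using Fcont unfolding continuous_on_iff .
    then obtain \<delta> where \<delta>: "\<delta> > 0" "\<And>x'. x' \<in> {0..} \<Longrightarrow> dist x' 0 < \<delta> \<Longrightarrow> dist (F x') (F 0) < F s"
      using Fs by (metis atLeast_iff order_refl)
    define x where "x = min (s/2) (\<delta>/2)"
    have x: "x > 0" "x \<le> s" "dist x 0 < \<delta>" using s \<delta>(1) by (auto simp: x_def dist_real_def)
    have "dist (F x) (F 0) < F s" by (rule \<delta>(2)) (use x in auto)
    then have "F x < F s" using F0 by (simp add: dist_real_def)
    moreover have "F s \<le> F x" by (rule Fmono) (use x in auto)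
    ultimately show False by simp
  qed
  have dz: "d (\<theta>, s) = 0" if s: "s > 0" and th: "\<theta> \<in> {0..2*pi}" for \<theta> s
  proof -
    have "(\<lambda>\<theta>. (d (\<theta>, s))^2) \<theta> = 0"
    proof (rule has_integral_0_cbox_imp_0[where a=0 and b="2*pi" and f="\<lambda>\<theta>. (d (\<theta>, s))^2"])
      show "continuous_on (cbox 0 (2*pi)) (\<lambda>\<theta>. (d (\<theta>, s))^2)" unfolding box_real by (rule slice_cont[OF cd2 s])
      show "\<And>x. x \<in> box 0 (2*pi) \<Longrightarrow> 0 \<le> (d (x, s))^2" by simp
      have "((\<lambda>\<theta>. (d (\<theta>, s))^2) has_integral F s) {0..2*pi}"
        unfolding F_def by (rule integrable_integral, rule slice_int[OF cd2 s])
      then show "((\<lambda>\<theta>. (d (\<theta>, s))^2) has_integral 0) (cbox 0 (2*pi))" using Fz[OF s] unfolding box_real by simp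
      show "box 0 (2*pi) \<noteq> {}" by (simp add: box_real not_le)
      show "\<theta> \<in> cbox 0 (2*pi)" using th by (simp add: box_real)
    qed
    then show ?thesis by simp
  qed
  show ?thesis
  proof (cases "snd p = 0")
    case True
    then show ?thesis using bdry[of "fst p"] by (metis prod.collapse)
  next
    case False
    then have sp: "snd p > 0" using p by simp
    have "(\<lambda>\<theta>. d (\<theta>, snd p)) (fst p) = 0"
      by (rule periodic_zero[where h="\<lambda>\<theta>. d (\<theta>, snd p)"]) (use per dz[OF sp] in auto)
    then show ?thesis by simp
  qed
qed



lemma pd1_works:
  assumes "has_cont_partials U F" "(\<theta>, s) \<in> U"
  shows "((\<lambda>t. F (t, s)) has_real_derivative pd1 F (\<theta>, s)) (at \<theta>)"
proof -
  have "(\<lambda>t. F (t, s)) differentiable (at \<theta>)" using assms unfolding has_cont_partials_def by force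
  then show ?thesis unfolding pd1_def has_real_derivative_iff_has_vector_derivative
    by (simp add: vector_derivative_works[symmetric])
qed

lemma pd2_works:
  assumes "has_cont_partials U F" "(\<theta>, s) \<in> U"
  shows "((\<lambda>t. F (\<theta>, t)) has_real_derivative pd2 F (\<theta>, s)) (at s)"
proof -
  have "(\<lambda>t. F (\<theta>, t)) differentiable (at s)" using assms unfolding has_cont_partials_def by force
  then show ?thesis unfolding pd2_def has_real_derivative_iff_has_vector_derivative
    by (simp add: vector_derivative_works[symmetric])
qed

lemma geom:
  fixes g1 g2 :: "real \<Rightarrow> real"
  assumes g1d: "(g1 has_real_derivative a) (at s)" and g2d: "(g2 has_real_derivative b) (at s)"
    and p1: "g1 s > 0" and p2: "g2 s > 0" and arc: "sqrt (a^2 + b^2) / g2 s = 1"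
  shows "g11 (\<lambda>(\<theta>, s). rot \<theta> (g1 s, 0, g2 s)) (\<theta>, s) = (g1 s / g2 s)^2"
    "g12 (\<lambda>(\<theta>, s). rot \<theta> (g1 s, 0, g2 s)) (\<theta>, s) = 0"
    "g22 (\<lambda>(\<theta>, s). rot \<theta> (g1 s, 0, g2 s)) (\<theta>, s) = 1"
proof -
  define f where "f = (\<lambda>(\<theta>, s). rot \<theta> (g1 s, 0::real, g2 s))"
  have fe: "f (t, r) = (g1 r * cos t, g1 r * sin t, g2 r)" for t r
    unfolding f_def rot_def by simp
  have e1: "(\<lambda>t. f (t, s)) = (\<lambda>t. (g1 s * cos t, g1 s * sin t, g2 s))" by (rule ext) (simp add: fe)
  have e2: "(\<lambda>t. f (\<theta>, t)) = (\<lambda>t. (g1 t * cos \<theta>, g1 t * sin \<theta>, g2 t))" by (rule ext) (simp add: fe)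
  have v1: "((\<lambda>t. f (t, s)) has_vector_derivative (- (g1 s * sin \<theta>), g1 s * cos \<theta>, 0)) (at \<theta>)"
    unfolding e1
  proof (intro has_vector_derivative_Pair)
    show "((\<lambda>t. g1 s * cos t) has_vector_derivative - (g1 s * sin \<theta>)) (at \<theta>)"
      unfolding has_real_derivative_iff_has_vector_derivative[symmetric]
      using DERIV_cmult[OF DERIV_cos[of \<theta>], of "g1 s"] by simp
    show "((\<lambda>t. g1 s * sin t) has_vector_derivative g1 s * cos \<theta>) (at \<theta>)"
      unfolding has_real_derivative_iff_has_vector_derivative[symmetric]
      using DERIV_cmult[OF DERIV_sin[of \<theta>], of "g1 s"] by simp
    show "((\<lambda>t. g2 s) has_vector_derivative 0) (at \<theta>)" by (rule has_vector_derivative_const)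
  qed
  have v2: "((\<lambda>t. f (\<theta>, t)) has_vector_derivative (a * cos \<theta>, a * sin \<theta>, b)) (at s)"
    unfolding e2
  proof (intro has_vector_derivative_Pair)
    show "((\<lambda>t. g1 t * cos \<theta>) has_vector_derivative a * cos \<theta>) (at s)"
      unfolding has_real_derivative_iff_has_vector_derivative[symmetric]
      using DERIV_cmult[OF g1d, of "cos \<theta>"] by (simp add: mult.commute)
    show "((\<lambda>t. g1 t * sin \<theta>) has_vector_derivative a * sin \<theta>) (at s)"
      unfolding has_real_derivative_iff_has_vector_derivative[symmetric]
      using DERIV_cmult[OF g1d, of "sin \<theta>"] by (simp add: mult.commute)
    show "(g2 has_vector_derivative b) (at s)"
      using g2d unfolding has_real_derivative_iff_has_vector_derivative .
  qed
  have pd1f: "pd1 f (\<theta>, s) = (- (g1 s * sin \<theta>), g1 s * cos \<theta>, 0)"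
    unfolding pd1_def using vector_derivative_at[OF v1] by simp
  have pd2f: "pd2 f (\<theta>, s) = (a * cos \<theta>, a * sin \<theta>, b)"
    unfolding pd2_def using vector_derivative_at[OF v2] by simp
  have x3f: "x3 (f (\<theta>, s)) = g2 s" by (simp add: fe x3_def)
  have sq: "sqrt (a^2 + b^2) = g2 s" using arc p2 by (simp add: field_simps)
  have ab: "a^2 + b^2 = (g2 s)^2"
  proof -
    have "a^2 + b^2 = (sqrt (a^2 + b^2))^2" by simp
    then show ?thesis using sq by simp
  qed
  have "inner (pd1 f (\<theta>, s)) (pd1 f (\<theta>, s)) = (g1 s * sin \<theta>)^2 + (g1 s * cos \<theta>)^2"
    unfolding pd1f by (simp add: inner_Pair power2_eq_square)
  also have "\<dots> = (g1 s)^2" by (simp add: power_mult_distrib flip: distrib_left)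
  finally have "g11 f (\<theta>, s) = (g1 s)^2 / (g2 s)^2"
    unfolding g11_def hyp_inner_def x3f by simp
  then show "g11 (\<lambda>(\<theta>, s). rot \<theta> (g1 s, 0, g2 s)) (\<theta>, s) = (g1 s / g2 s)^2"
    unfolding f_def by (simp add: power_divide)
  have "g12 f (\<theta>, s) = 0"
    unfolding g12_def hyp_inner_def pd1f pd2f x3f by (simp add: inner_Pair algebra_simps)
  then show "g12 (\<lambda>(\<theta>, s). rot \<theta> (g1 s, 0, g2 s)) (\<theta>, s) = 0" unfolding f_def .
  have "inner (pd2 f (\<theta>, s)) (pd2 f (\<theta>, s)) = (a * cos \<theta>)^2 + (a * sin \<theta>)^2 + b^2"
    unfolding pd2f by (simp add: inner_Pair power2_eq_square)
  also have "\<dots> = a^2 + b^2" by (simp add: power_mult_distrib flip: distrib_left)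
  finally have "g22 f (\<theta>, s) = (a^2 + b^2) / (g2 s)^2"
    unfolding g22_def hyp_inner_def x3f by simp
  also have "\<dots> = 1" using ab p2 by simp
  finally show "g22 (\<lambda>(\<theta>, s). rot \<theta> (g1 s, 0, g2 s)) (\<theta>, s) = 1" unfolding f_def .
qed

lemma harm_pde:
  fixes g1 g2 g1' g2' w' :: "real \<Rightarrow> real" and u :: "real \<times> real \<Rightarrow> real"
  assumes g1d: "\<And>s. s \<ge> 0 \<Longrightarrow> (g1 has_real_derivative g1' s) (at s)"
    and g2d: "\<And>s. s \<ge> 0 \<Longrightarrow> (g2 has_real_derivative g2' s) (at s)"
    and pos1: "\<And>s. s \<ge> 0 \<Longrightarrow> g1 s > 0" and pos2: "\<And>s. s \<ge> 0 \<Longrightarrow> g2 s > 0"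
    and arc: "\<And>s. s \<ge> 0 \<Longrightarrow> sqrt ((g1' s)^2 + (g2' s)^2) / g2 s = 1"
    and wder: "\<And>s. s > 0 \<Longrightarrow> ((\<lambda>t. g1 t / g2 t) has_real_derivative w' s) (at s)"
    and H: "harmonic_on (\<lambda>(\<theta>, s). rot \<theta> (g1 s, 0, g2 s)) {p. snd p > 0} u"
    and s: "s > 0"
  shows "pd1 (pd1 u) (\<theta>, s) / (g1 s / g2 s) + w' s * pd2 u (\<theta>, s) + (g1 s / g2 s) * pd2 (pd2 u) (\<theta>, s) = 0"
proof -
  define f where "f = (\<lambda>(\<theta>, s). rot \<theta> (g1 s, 0::real, g2 s))"
  define w where "w t = g1 t / g2 t" for t
  have wp: "w t > 0" if "t \<ge> 0" for t unfolding w_def using pos1[OF that] pos2[OF that] by simp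
  have gg: "g11 f (x, t) = (w t)^2 \<and> g12 f (x, t) = 0 \<and> g22 f (x, t) = 1" if t: "t \<ge> 0" for x t
    using geom[OF g1d[OF t] g2d[OF t] pos1[OF t] pos2[OF t] arc[OF t], of x] unfolding f_def w_def by simp
  have gd: "gdet f (x, t) = (w t)^2" if t: "t \<ge> 0" for x t
    using gg[OF t, of x] unfolding gdet_def by simp
  have sg: "sqrt (gdet f (x, t)) = w t" if t: "t \<ge> 0" for x t
    using gd[OF t, of x] wp[OF t] by simp
  have fl1: "flux1 f u (x, t) = pd1 u (x, t) / w t" if t: "t \<ge> 0" for x t
    using gg[OF t, of x] sg[OF t, of x] gd[OF t, of x] wp[OF t] unfolding flux1_def
    by (simp add: power2_eq_square)
  have fl2: "flux2 f u (x, t) = w t * pd2 u (x, t)" if t: "t \<ge> 0" for x t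
    using gg[OF t, of x] sg[OF t, of x] gd[OF t, of x] wp[OF t] unfolding flux2_def
    by (simp add: power2_eq_square)
  have C2: "C2_on {p. snd p > 0} u" and lb0: "laplace_beltrami f u (\<theta>, s) = 0"
    using H s unfolding harmonic_on_def f_def by auto
  have hcp1: "has_cont_partials {p. snd p > 0} (pd1 u)" and hcp2: "has_cont_partials {p. snd p > 0} (pd2 u)"
    using C2 unfolding C2_on_def by auto
  have lb: "pd1 (flux1 f u) (\<theta>, s) + pd2 (flux2 f u) (\<theta>, s) = 0"
    using lb0 sg[of s \<theta>] wp[of s] s unfolding laplace_beltrami_def by simp
  have e1: "(\<lambda>t. flux1 f u (t, s)) = (\<lambda>t. pd1 u (t, s) / w s)" by (rule ext) (use fl1 s in simp)
  have D1: "((\<lambda>t. pd1 u (t, s) / w s) has_real_derivative pd1 (pd1 u) (\<theta>, s) / w s) (at \<theta>)"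
    by (rule DERIV_cdivide[OF pd1_works[OF hcp1]]) (use s in simp)
  have p1: "pd1 (flux1 f u) (\<theta>, s) = pd1 (pd1 u) (\<theta>, s) / w s"
    unfolding pd1_def[of "flux1 f u"] fst_conv snd_conv e1
    by (rule vector_derivative_at) (use D1 in \<open>simp add: has_real_derivative_iff_has_vector_derivative\<close>)
  have wd: "(w has_real_derivative w' s) (at s)" using wder[OF s] unfolding w_def[abs_def] .
  have D2: "((\<lambda>t. w t * pd2 u (\<theta>, t)) has_real_derivative w' s * pd2 u (\<theta>, s) + pd2 (pd2 u) (\<theta>, s) * w s) (at s)"
    by (rule DERIV_mult[OF wd pd2_works[OF hcp2]]) (use s in simp)
  have D2': "((\<lambda>t. flux2 f u (\<theta>, t)) has_real_derivative w' s * pd2 u (\<theta>, s) + pd2 (pd2 u) (\<theta>, s) * w s) (at s)"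
    by (rule has_field_derivative_transform_within_open[OF D2, of "{0<..}"]) (use s fl2 in auto)
  have p2: "pd2 (flux2 f u) (\<theta>, s) = w' s * pd2 u (\<theta>, s) + pd2 (pd2 u) (\<theta>, s) * w s"
    unfolding pd2_def[of "flux2 f u"] fst_conv snd_conv
    by (rule vector_derivative_at) (use D2' in \<open>simp add: has_real_derivative_iff_has_vector_derivative\<close>)
  show ?thesis using lb unfolding p1 p2 w_def by (simp add: algebra_simps)
qed


theorem theorem8p1:
  fixes g1 g2 :: "real \<Rightarrow> real" and C s0 :: real
  assumes smooth1: "smooth_at_all {0..} g1"
    and smooth2: "smooth_at_all {0..} g2"
    and pos1: "\<forall>s\<ge>0. g1 s > 0"
    and pos2: "\<forall>s\<ge>0. g2 s > 0"
    and arclength: "\<forall>s\<ge>0. sqrt ((deriv g1 s)^2 + (deriv g2 s)^2) / g2 s = 1"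
    and C_pos: "C > 0" and s0_pos: "s0 > 0"
    and growth: "\<forall>s\<ge>s0. (1 / s) * integral {0..s} (\<lambda>t. g1 t / g2 t) \<le> C * s"
  shows "parabolic_end (\<lambda>(\<theta>, s). rot \<theta> (g1 s, 0, g2 s))"
proof -
  define f where "f = (\<lambda>(\<theta>, s). rot \<theta> (g1 s, 0::real, g2 s))"
  have g1d: "(g1 has_real_derivative deriv g1 s) (at s)" if "s \<ge> 0" for s
  proof -
    have "((deriv ^^ 0) g1) differentiable (at s)" using smooth1 that unfolding smooth_at_all_def by blast
    then show ?thesis by (simp add: DERIV_deriv_iff_real_differentiable)
  qed
  have g2d: "(g2 has_real_derivative deriv g2 s) (at s)" if "s \<ge> 0" for s
  proof -
    have "((deriv ^^ 0) g2) differentiable (at s)" using smooth2 that unfolding smooth_at_all_def by blast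
    then show ?thesis by (simp add: DERIV_deriv_iff_real_differentiable)
  qed
  have p1: "g1 s > 0" if "s \<ge> 0" for s using pos1 that by blast
  have p2: "g2 s > 0" if "s \<ge> 0" for s using pos2 that by blast
  have arc: "sqrt ((deriv g1 s)^2 + (deriv g2 s)^2) / g2 s = 1" if "s \<ge> 0" for s using arclength that by blast
  define w' where "w' s = (deriv g1 s * g2 s - g1 s * deriv g2 s) / (g2 s * g2 s)" for s
  have wder: "((\<lambda>t. g1 t / g2 t) has_real_derivative w' s) (at s)" if "s > 0" for s
    unfolding w'_def by (rule DERIV_divide[OF g1d g2d]) (use that p2[of s] in auto)
  have wcont: "continuous_on {0..} (\<lambda>t. g1 t / g2 t)"
  proof (rule continuous_on_divide)
    show "continuous_on {0..} g1" by (rule cont_from_deriv[where f'="deriv g1"]) (use g1d in auto)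
    show "continuous_on {0..} g2" by (rule cont_from_deriv[where f'="deriv g2"]) (use g2d in auto)
    show "\<forall>x\<in>{0..}. g2 x \<noteq> 0" using p2 by force
  qed
  have wpos: "g1 s / g2 s > 0" if "s \<ge> 0" for s using p1[OF that] p2[OF that] by simp
  have growth': "integral {0..s} (\<lambda>t. g1 t / g2 t) \<le> C * s^2" if s: "s \<ge> s0" for s
  proof -
    have sp: "s > 0" using s s0_pos by simp
    have "(1 / s) * integral {0..s} (\<lambda>t. g1 t / g2 t) \<le> C * s" using growth s by blast
    then have "integral {0..s} (\<lambda>t. g1 t / g2 t) / s \<le> C * s" by simp
    then show ?thesis using sp by (simp add: pos_divide_le_eq power2_eq_square mult.assoc)
  qed
  show ?thesis
    unfolding parabolic_end_def f_def[symmetric]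
  proof (intro allI impI)
    fix u v :: "real \<times> real \<Rightarrow> real" and p :: "real \<times> real"
    assume A: "bounded_harmonic_on_end f u \<and> bounded_harmonic_on_end f v \<and> (\<forall>\<theta>. u (\<theta>, 0) = v (\<theta>, 0))"
      and p: "0 \<le> snd p"
    have Hu: "harmonic_on f {p. snd p > 0} u" and Hv: "harmonic_on f {p. snd p > 0} v"
      and eu: "end_function u" and ev: "end_function v"
      and cu: "continuous_on {p. snd p \<ge> 0} u" and cv: "continuous_on {p. snd p \<ge> 0} v"
      using A unfolding bounded_harmonic_on_end_def by auto
    obtain Bu where Bu: "\<And>p. snd p \<ge> 0 \<Longrightarrow> \<bar>u p\<bar> \<le> Bu" using A unfolding bounded_harmonic_on_end_def by blast
    obtain Bv where Bv: "\<And>p. snd p \<ge> 0 \<Longrightarrow> \<bar>v p\<bar> \<le> Bv" using A unfolding bounded_harmonic_on_end_def by blast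
    have bd: "u (\<theta>, 0) = v (\<theta>, 0)" for \<theta> using A by blast
    have hu: "has_cont_partials {p. snd p > 0} u" "has_cont_partials {p. snd p > 0} (pd1 u)" "has_cont_partials {p. snd p > 0} (pd2 u)"
      using Hu unfolding harmonic_on_def C2_on_def by auto
    have hv: "has_cont_partials {p. snd p > 0} v" "has_cont_partials {p. snd p > 0} (pd1 v)" "has_cont_partials {p. snd p > 0} (pd2 v)"
      using Hv unfolding harmonic_on_def C2_on_def by auto
    have pdeu: "pd1 (pd1 u) (\<theta>, s) / (g1 s / g2 s) + w' s * pd2 u (\<theta>, s) + (g1 s / g2 s) * pd2 (pd2 u) (\<theta>, s) = 0"
      if "s > 0" for \<theta> s
      by (rule harm_pde[OF g1d g2d p1 p2 arc wder Hu[unfolded f_def] that])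
    have pdev: "pd1 (pd1 v) (\<theta>, s) / (g1 s / g2 s) + w' s * pd2 v (\<theta>, s) + (g1 s / g2 s) * pd2 (pd2 v) (\<theta>, s) = 0"
      if "s > 0" for \<theta> s
      by (rule harm_pde[OF g1d g2d p1 p2 arc wder Hv[unfolded f_def] that])
    have "(\<lambda>p. u p - v p) p = 0"
    proof (rule main_energy[where ds="\<lambda>p. pd2 u p - pd2 v p" and dss="\<lambda>p. pd2 (pd2 u) p - pd2 (pd2 v) p"
          and dt="\<lambda>p. pd1 u p - pd1 v p" and dtt="\<lambda>p. pd1 (pd1 u) p - pd1 (pd1 v) p"
          and w="\<lambda>t. g1 t / g2 t" and w'=w' and B="Bu + Bv"])
      show "\<And>s. 0 \<le> s \<Longrightarrow> 0 < g1 s / g2 s" by (rule wpos)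
      show "continuous_on {0..} (\<lambda>t. g1 t / g2 t)" by (rule wcont)
      show "\<And>s. 0 < s \<Longrightarrow> ((\<lambda>t. g1 t / g2 t) has_real_derivative w' s) (at s)" by (rule wder)
      show "0 < C" by (rule C_pos)
      show "0 < s0" by (rule s0_pos)
      show "\<And>s. s0 \<le> s \<Longrightarrow> integral {0..s} (\<lambda>t. g1 t / g2 t) \<le> C * s^2" by (rule growth')
      show "\<And>\<theta> s. u (\<theta> + 2 * pi, s) - v (\<theta> + 2 * pi, s) = u (\<theta>, s) - v (\<theta>, s)"
        using eu ev unfolding end_function_def by simp
      show "continuous_on {p. 0 \<le> snd p} (\<lambda>p. u p - v p)" by (intro continuous_intros cu cv)
      show "\<And>p. 0 \<le> snd p \<Longrightarrow> \<bar>u p - v p\<bar> \<le> Bu + Bv"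
      proof -
        fix q :: "real \<times> real" assume "0 \<le> snd q"
        then have "\<bar>u q\<bar> \<le> Bu" "\<bar>v q\<bar> \<le> Bv" using Bu Bv by auto
        then show "\<bar>u q - v q\<bar> \<le> Bu + Bv" by linarith
      qed
      show "\<And>\<theta>. u (\<theta>, 0) - v (\<theta>, 0) = 0" using bd by simp
      show "\<And>\<theta> s. 0 < s \<Longrightarrow> ((\<lambda>t. u (\<theta>, t) - v (\<theta>, t)) has_real_derivative pd2 u (\<theta>, s) - pd2 v (\<theta>, s)) (at s)"
        by (rule DERIV_diff[OF pd2_works[OF hu(1)] pd2_works[OF hv(1)]]) auto
      show "\<And>\<theta> s. 0 < s \<Longrightarrow> ((\<lambda>t. pd2 u (\<theta>, t) - pd2 v (\<theta>, t)) has_real_derivative pd2 (pd2 u) (\<theta>, s) - pd2 (pd2 v) (\<theta>, s)) (at s)"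
        by (rule DERIV_diff[OF pd2_works[OF hu(3)] pd2_works[OF hv(3)]]) auto
      show "\<And>\<theta> s. 0 < s \<Longrightarrow> ((\<lambda>t. u (t, s) - v (t, s)) has_real_derivative pd1 u (\<theta>, s) - pd1 v (\<theta>, s)) (at \<theta>)"
        by (rule DERIV_diff[OF pd1_works[OF hu(1)] pd1_works[OF hv(1)]]) auto
      show "\<And>\<theta> s. 0 < s \<Longrightarrow> ((\<lambda>t. pd1 u (t, s) - pd1 v (t, s)) has_real_derivative pd1 (pd1 u) (\<theta>, s) - pd1 (pd1 v) (\<theta>, s)) (at \<theta>)"
        by (rule DERIV_diff[OF pd1_works[OF hu(2)] pd1_works[OF hv(2)]]) auto
      show "continuous_on {p. 0 < snd p} (\<lambda>p. pd2 u p - pd2 v p)"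
        using hu hv unfolding has_cont_partials_def by (intro continuous_on_diff) auto
      show "continuous_on {p. 0 < snd p} (\<lambda>p. pd2 (pd2 u) p - pd2 (pd2 v) p)"
        using hu hv unfolding has_cont_partials_def by (intro continuous_on_diff) auto
      show "continuous_on {p. 0 < snd p} (\<lambda>p. pd1 u p - pd1 v p)"
        using hu hv unfolding has_cont_partials_def by (intro continuous_on_diff) auto
      show "continuous_on {p. 0 < snd p} (\<lambda>p. pd1 (pd1 u) p - pd1 (pd1 v) p)"
        using hu hv unfolding has_cont_partials_def by (intro continuous_on_diff) auto
      show "\<And>\<theta> s. 0 < s \<Longrightarrow> (pd1 (pd1 u) (\<theta>, s) - pd1 (pd1 v) (\<theta>, s)) / (g1 s / g2 s) +
            w' s * (pd2 u (\<theta>, s) - pd2 v (\<theta>, s)) + g1 s / g2 s * (pd2 (pd2 u) (\<theta>, s) - pd2 (pd2 v) (\<theta>, s)) = 0"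
      proof -
        fix \<theta> s :: real assume s: "0 < s"
        have "(pd1 (pd1 u) (\<theta>, s) - pd1 (pd1 v) (\<theta>, s)) / (g1 s / g2 s) +
            w' s * (pd2 u (\<theta>, s) - pd2 v (\<theta>, s)) + g1 s / g2 s * (pd2 (pd2 u) (\<theta>, s) - pd2 (pd2 v) (\<theta>, s))
          = (pd1 (pd1 u) (\<theta>, s) / (g1 s / g2 s) + w' s * pd2 u (\<theta>, s) + (g1 s / g2 s) * pd2 (pd2 u) (\<theta>, s))
            - (pd1 (pd1 v) (\<theta>, s) / (g1 s / g2 s) + w' s * pd2 v (\<theta>, s) + (g1 s / g2 s) * pd2 (pd2 v) (\<theta>, s))"
          by (simp add: algebra_simps diff_divide_distrib)
        then show "(pd1 (pd1 u) (\<theta>, s) - pd1 (pd1 v) (\<theta>, s)) / (g1 s / g2 s) +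
            w' s * (pd2 u (\<theta>, s) - pd2 v (\<theta>, s)) + g1 s / g2 s * (pd2 (pd2 u) (\<theta>, s) - pd2 (pd2 v) (\<theta>, s)) = 0"
          using pdeu[OF s] pdev[OF s] by simp
      qed
      show "0 \<le> snd p" by (rule p)
    qed
    then show "u p = v p" by simp
  qed
qed

end
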